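(* Let $(X,\sigma,\tau)$ be a separable, chronologically dense Lorentzian metric space satisfying the S-property, and let $(P,F),(P',F')\in\overline{X}$ with $F\neq\emptyset\neq P'$. Then there exist a past chain $\{q_n\}$ with $F=I^+[\{q_n\}]$ and a future chain $\{p'_n\}$ with $P'=I^-[\{p'_n\}]$; for any such chains the limit $\lim_n\tau(q_n,p'_n)$ exists in $[0,\infty]$, and it does not depend on the choice of the chains. Consequently $\overline{\tau}:\overline X\times\overline X\to[0,\infty]$ is well defined.
   Context: A Lorentzian metric space $(X,\sigma,\tau)$ is a topological space with $\tau:X\times X\to[0,\infty]$ lower semicontinuous and satisfying $\tau(x,z)\geq\tau(x,y)+\tau(y,z)$ whenever $\tau(x,y),\tau(y,z)>0$. Write $x\ll y$ iff $\tau(x,y)>0$, $I^+(x)=\{y:x\ll y\}$, $I^-(x)=\{y:y\ll x\}$, $I^\pm[A]=\bigcup_{a\in A}I^\pm(a)$. Future (resp. past) chain: $x_n\ll x_{n+1}$ (resp. $x_{n+1}\ll x_n$) for all $n$. Separable: there is a countable $S$ with $x\ll y\Rightarrow\exists s\in S$, $x\ll s\ll y$. Chronologically dense: every $x$ with $I^-(x)\neq\emptyset$ (resp. $I^+(x)\neq\emptyset$) is the $\sigma$-limit of a future (resp. past) chain. Past set: $P=I^-[P]$; $\downarrow S=I^-[\{p:p\ll q\ \forall q\in S\}]$; IP: past set not the union of two proper past subsets; PIP: IP of the form $I^-(p)$; future sets, $\uparrow S$, IF, PIF dually. For nonempty IP $P$ and IF $F$, $P\sim_S F$ iff $P$ is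 a maximal IP in $\downarrow F$ and $F$ a maximal IF in $\uparrow P$; $P\sim_S\emptyset$ (resp. $\emptyset\sim_S F$) if the nonempty $P$ (resp. $F$) is S-related to no nonempty IF (resp. IP). S-property: for every $x$, $I^-(x)\sim_S I^+(x)$, and no PIF other than $I^+(x)$ (resp. PIP other than $I^-(x)$) is S-related to $I^-(x)$ (resp. $I^+(x)$). c-completion $\overline X=\{(P,F):P\sim_S F\}$. The map $\overline\tau$ is defined by $\overline\tau((P,F),(P',F'))=0$ if $F=\emptyset$ or $P'=\emptyset$, and $\overline\tau((P,F),(P',F'))=\lim_n\tau(q_n,p'_n)$ otherwise, with chains as in the claim. *)

theory Defs
  imports Complex_Main "HOL-Library.Extended_Nonnegative_Real"
begin

text \<open>Lorentzian metric spaces. The topology sigma is the topology of the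
 type 'a (class topological_space), so X is the whole type. The time
 separation tau takes values in [0,\<infinity>] = ennreal.\<close>

definition lsc :: "('b::topological_space \<Rightarrow> 'c::linorder) \<Rightarrow> bool" where
  "lsc f \<longleftrightarrow> (\<forall>z c. c < f z \<longrightarrow> eventually (\<lambda>w. c < f w) (nhds z))"

definition lorentzian_metric_space :: "('a::topological_space \<Rightarrow> 'a \<Rightarrow> ennreal) \<Rightarrow> bool" where
  "lorentzian_metric_space tau \<longleftrightarrow>
     lsc (\<lambda>(x, y). tau x y) \<and>
     (\<forall>x y z. tau x y > 0 \<and> tau y z > 0 \<longrightarrow> tau x z \<ge> tau x y + tau y z)"

definition chron :: "('a \<Rightarrow> 'a \<Rightarrow> ennreal) \<Rightarrow> 'a \<Rightarrow> 'a \<Rightarrow> bool" where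
  "chron tau x y \<longleftrightarrow> tau x y > 0"

definition Ifut :: "('a \<Rightarrow> 'a \<Rightarrow> ennreal) \<Rightarrow> 'a \<Rightarrow> 'a set" where
  "Ifut tau x = {y. chron tau x y}"

definition Ipast :: "('a \<Rightarrow> 'a \<Rightarrow> ennreal) \<Rightarrow> 'a \<Rightarrow> 'a set" where
  "Ipast tau x = {y. chron tau y x}"

definition IfutS :: "('a \<Rightarrow> 'a \<Rightarrow> ennreal) \<Rightarrow> 'a set \<Rightarrow> 'a set" where
  "IfutS tau A = (\<Union>a\<in>A. Ifut tau a)"

definition IpastS :: "('a \<Rightarrow> 'a \<Rightarrow> ennreal) \<Rightarrow> 'a set \<Rightarrow> 'a set" where
  "IpastS tau A = (\<Union>a\<in>A. Ipast tau a)"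

definition future_chain :: "('a \<Rightarrow> 'a \<Rightarrow> ennreal) \<Rightarrow> (nat \<Rightarrow> 'a) \<Rightarrow> bool" where
  "future_chain tau x \<longleftrightarrow> (\<forall>n. chron tau (x n) (x (Suc n)))"

definition past_chain :: "('a \<Rightarrow> 'a \<Rightarrow> ennreal) \<Rightarrow> (nat \<Rightarrow> 'a) \<Rightarrow> bool" where
  "past_chain tau x \<longleftrightarrow> (\<forall>n. chron tau (x (Suc n)) (x n))"

definition separable_lms :: "('a \<Rightarrow> 'a \<Rightarrow> ennreal) \<Rightarrow> bool" where
  "separable_lms tau \<longleftrightarrow> (\<exists>S. countable S \<and>
     (\<forall>x y. chron tau x y \<longrightarrow> (\<exists>s\<in>S. chron tau x s \<and> chron tau s y)))"

definition chronologically_dense :: "('a::topological_space \<Rightarrow> 'a \<Rightarrow> ennreal) \<Rightarrow> bool" where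
  "chronologically_dense tau \<longleftrightarrow>
     (\<forall>x. Ipast tau x \<noteq> {} \<longrightarrow> (\<exists>c. future_chain tau c \<and> c \<longlonglongrightarrow> x)) \<and>
     (\<forall>x. Ifut tau x \<noteq> {} \<longrightarrow> (\<exists>c. past_chain tau c \<and> c \<longlonglongrightarrow> x))"

definition past_set :: "('a \<Rightarrow> 'a \<Rightarrow> ennreal) \<Rightarrow> 'a set \<Rightarrow> bool" where
  "past_set tau P \<longleftrightarrow> P = IpastS tau P"

definition future_set :: "('a \<Rightarrow> 'a \<Rightarrow> ennreal) \<Rightarrow> 'a set \<Rightarrow> bool" where
  "future_set tau F \<longleftrightarrow> F = IfutS tau F"

definition down :: "('a \<Rightarrow> 'a \<Rightarrow> ennreal) \<Rightarrow> 'a set \<Rightarrow> 'a set" where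
  "down tau S = IpastS tau {p. \<forall>q\<in>S. chron tau p q}"

definition up :: "('a \<Rightarrow> 'a \<Rightarrow> ennreal) \<Rightarrow> 'a set \<Rightarrow> 'a set" where
  "up tau S = IfutS tau {p. \<forall>q\<in>S. chron tau q p}"

definition IP :: "('a \<Rightarrow> 'a \<Rightarrow> ennreal) \<Rightarrow> 'a set \<Rightarrow> bool" where
  "IP tau P \<longleftrightarrow> P \<noteq> {} \<and> past_set tau P \<and>
     \<not> (\<exists>A B. past_set tau A \<and> past_set tau B \<and> A \<subset> P \<and> B \<subset> P \<and> P = A \<union> B)"

definition IF :: "('a \<Rightarrow> 'a \<Rightarrow> ennreal) \<Rightarrow> 'a set \<Rightarrow> bool" where
  "IF tau F \<longleftrightarrow> F \<noteq> {} \<and> future_set tau F \<and>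
     \<not> (\<exists>A B. future_set tau A \<and> future_set tau B \<and> A \<subset> F \<and> B \<subset> F \<and> F = A \<union> B)"

definition Srel_ne :: "('a \<Rightarrow> 'a \<Rightarrow> ennreal) \<Rightarrow> 'a set \<Rightarrow> 'a set \<Rightarrow> bool" where
  "Srel_ne tau P F \<longleftrightarrow>
     IP tau P \<and> IF tau F \<and>
     P \<subseteq> down tau F \<and> (\<forall>P'. IP tau P' \<and> P' \<subseteq> down tau F \<and> P \<subseteq> P' \<longrightarrow> P' = P) \<and>
     F \<subseteq> up tau P \<and> (\<forall>F'. IF tau F' \<and> F' \<subseteq> up tau P \<and> F \<subseteq> F' \<longrightarrow> F' = F)"

definition Srel :: "('a \<Rightarrow> 'a \<Rightarrow> ennreal) \<Rightarrow> 'a set \<Rightarrow> 'a set \<Rightarrow> bool" where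
  "Srel tau P F \<longleftrightarrow>
     (P \<noteq> {} \<and> F \<noteq> {} \<and> Srel_ne tau P F) \<or>
     (P \<noteq> {} \<and> F = {} \<and> IP tau P \<and> \<not> (\<exists>F'. F' \<noteq> {} \<and> Srel_ne tau P F')) \<or>
     (P = {} \<and> F \<noteq> {} \<and> IF tau F \<and> \<not> (\<exists>P'. P' \<noteq> {} \<and> Srel_ne tau P' F))"

definition S_property :: "('a \<Rightarrow> 'a \<Rightarrow> ennreal) \<Rightarrow> bool" where
  "S_property tau \<longleftrightarrow>
     (\<forall>x. Srel tau (Ipast tau x) (Ifut tau x) \<and>
        (\<forall>y. IF tau (Ifut tau y) \<and> Ifut tau y \<noteq> Ifut tau x \<longrightarrow>
              \<not> Srel tau (Ipast tau x) (Ifut tau y)) \<and>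
        (\<forall>y. IP tau (Ipast tau y) \<and> Ipast tau y \<noteq> Ipast tau x \<longrightarrow>
              \<not> Srel tau (Ipast tau y) (Ifut tau x)))"

definition c_completion :: "('a \<Rightarrow> 'a \<Rightarrow> ennreal) \<Rightarrow> ('a set \<times> 'a set) set" where
  "c_completion tau = {(P, F). Srel tau P F}"

end

theory Submission
  imports Defs
begin

lemma pastset_IpastS:
  assumes transA: "\<forall>x y z. chron tau x y \<longrightarrow> chron tau y z \<longrightarrow> chron tau x z"
    and sep: "separable_lms tau"
  shows "past_set tau (IpastS tau S)"
proof -
  have trans: "\<And>x y z. chron tau x y \<Longrightarrow> chron tau y z \<Longrightarrow> chron tau x z" using transA by blast
  obtain D where D: "\<And>x y. chron tau x y \<Longrightarrow> \<exists>s\<in>D. chron tau x s \<and> chron tau s y"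
    using sep unfolding separable_lms_def by blast
  show ?thesis unfolding past_set_def
  proof
    show "IpastS tau S \<subseteq> IpastS tau (IpastS tau S)"
    proof
      fix r assume "r \<in> IpastS tau S"
      then obtain s where s: "s \<in> S" "chron tau r s" by (auto simp: IpastS_def Ipast_def)
      then obtain d where "chron tau r d" "chron tau d s" using D by blast
      then show "r \<in> IpastS tau (IpastS tau S)" using s by (auto simp: IpastS_def Ipast_def)
    qed
    show "IpastS tau (IpastS tau S) \<subseteq> IpastS tau S"
      using trans by (auto simp: IpastS_def Ipast_def)
  qed
qed

lemma IP_chain:
  assumes transA: "\<forall>x y z. chron tau x y \<longrightarrow> chron tau y z \<longrightarrow> chron tau x z"
    and sep: "separable_lms tau"
    and ip: "IP tau P"
  shows "\<exists>p. future_chain tau p \<and> P = IpastS tau (range p)"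
proof -
  have trans: "\<And>x y z. chron tau x y \<Longrightarrow> chron tau y z \<Longrightarrow> chron tau x z" using transA by blast
  have Pne: "P \<noteq> {}" and Pp: "P = IpastS tau P" using ip by (auto simp: IP_def past_set_def)
  have sub: "IpastS tau A \<subseteq> P" if "A \<subseteq> P" for A
  proof -
    have "IpastS tau A \<subseteq> IpastS tau P" using that by (auto simp: IpastS_def)
    then show ?thesis using Pp by simp
  qed
  have dir: "\<exists>z\<in>P. chron tau x z \<and> chron tau y z" if xy: "x \<in> P" "y \<in> P" for x y
  proof (rule ccontr)
    assume nz: "\<not> (\<exists>z\<in>P. chron tau x z \<and> chron tau y z)"
    define A where "A = IpastS tau (Ifut tau x \<inter> P)"
    define B where "B = IpastS tau (P - Ifut tau x)"
    have pA: "past_set tau A" "past_set tau B" unfolding A_def B_def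
      using pastset_IpastS[OF transA sep] by blast+
    have AP: "A \<subseteq> P" "B \<subseteq> P" unfolding A_def B_def by (rule sub, blast)+
    have "A \<union> B = IpastS tau P" unfolding A_def B_def IpastS_def by blast
    then have U: "P = A \<union> B" using Pp by simp
    have "y \<notin> A" using nz by (auto simp: A_def IpastS_def Ipast_def Ifut_def)
    moreover have "x \<notin> B" by (auto simp: B_def IpastS_def Ipast_def Ifut_def)
    ultimately have "A \<subset> P" "B \<subset> P" using AP xy by auto
    then show False using ip pA U unfolding IP_def by blast
  qed
  obtain D where D: "countable D" "\<And>x y. chron tau x y \<Longrightarrow> \<exists>s\<in>D. chron tau x s \<and> chron tau s y"
    using sep unfolding separable_lms_def by blast
  define T where "T = D \<inter> P"
  have inT: "\<exists>s\<in>T. chron tau y s" if "y \<in> P" for y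
  proof -
    from that Pp have "y \<in> IpastS tau P" by simp
    then obtain w where w: "w \<in> P" "chron tau y w" by (auto simp: IpastS_def Ipast_def)
    then obtain s where s: "s \<in> D" "chron tau y s" "chron tau s w" using D(2) by blast
    have "s \<in> IpastS tau P" using s w by (auto simp: IpastS_def Ipast_def)
    then have "s \<in> P" using Pp by simp
    then show ?thesis using s T_def by blast
  qed
  have Tne: "T \<noteq> {}" using inT Pne by blast
  have cT: "countable T" using D(1) T_def by simp
  define t where "t = from_nat_into T"
  have rt: "range t = T" using range_from_nat_into[OF Tne cT] t_def by simp
  have tP: "t n \<in> P" for n using rt T_def by auto
  define p where "p = rec_nat (SOME z. z \<in> P \<and> chron tau (t 0) z)
      (\<lambda>n pn. SOME z. z \<in> P \<and> chron tau pn z \<and> chron tau (t (Suc n)) z)"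
  have p0: "p 0 = (SOME z. z \<in> P \<and> chron tau (t 0) z)" by (simp add: p_def)
  have pS: "p (Suc n) = (SOME z. z \<in> P \<and> chron tau (p n) z \<and> chron tau (t (Suc n)) z)" for n
    by (simp add: p_def)
  have inv: "p n \<in> P \<and> chron tau (t n) (p n)" for n
  proof (induction n)
    case 0
    have "\<exists>z. z \<in> P \<and> chron tau (t 0) z" using dir[OF tP tP] by blast
    then show ?case unfolding p0 by (rule someI_ex)
  next
    case (Suc n)
    have "\<exists>z. z \<in> P \<and> chron tau (p n) z \<and> chron tau (t (Suc n)) z"
      using dir[of "p n" "t (Suc n)"] Suc tP by blast
    from someI_ex[OF this] show ?case unfolding pS by blast
  qed
  have step: "chron tau (p n) (p (Suc n))" for n
  proof -
    have "\<exists>z. z \<in> P \<and> chron tau (p n) z \<and> chron tau (t (Suc n)) z"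
      using dir[of "p n" "t (Suc n)"] inv tP by blast
    from someI_ex[OF this] show ?thesis unfolding pS by blast
  qed
  have "P \<subseteq> IpastS tau (range p)"
  proof
    fix y assume "y \<in> P"
    then obtain s where s: "s \<in> T" "chron tau y s" using inT by blast
    then obtain n where "s = t n" using rt by blast
    then have "chron tau y (p n)" using trans s inv by blast
    then show "y \<in> IpastS tau (range p)" by (auto simp: IpastS_def Ipast_def)
  qed
  moreover have "IpastS tau (range p) \<subseteq> P" using inv by (intro sub) auto
  ultimately show ?thesis using step unfolding future_chain_def by blast
qed

lemma IF_flip: "IF tau F = IP (\<lambda>x y. tau y x) F"
  by (simp add: IF_def IP_def future_set_def past_set_def IfutS_def IpastS_def Ifut_def Ipast_def chron_def)

lemma IF_chain:
  assumes transA: "\<forall>x y z. chron tau x y \<longrightarrow> chron tau y z \<longrightarrow> chron tau x z"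
    and sep: "separable_lms tau"
    and ipf: "IF tau F"
  shows "\<exists>q. past_chain tau q \<and> F = IfutS tau (range q)"
proof -
  let ?t = "\<lambda>x y. tau y x"
  have tr: "\<forall>x y z. chron ?t x y \<longrightarrow> chron ?t y z \<longrightarrow> chron ?t x z"
  proof (intro allI impI)
    fix x y z assume "chron ?t x y" "chron ?t y z"
    then have "chron tau z y" "chron tau y x" by (simp_all add: chron_def)
    then have "chron tau z x" using transA by blast
    then show "chron ?t x z" by (simp add: chron_def)
  qed
  have sp: "separable_lms ?t"
  proof -
    obtain D where D: "countable D" "\<forall>x y. chron tau x y \<longrightarrow> (\<exists>s\<in>D. chron tau x s \<and> chron tau s y)"
      using sep unfolding separable_lms_def by blast
    have "\<forall>x y. chron ?t x y \<longrightarrow> (\<exists>s\<in>D. chron ?t x s \<and> chron ?t s y)"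
    proof (intro allI impI)
      fix x y assume "chron ?t x y"
      then have "chron tau y x" by (simp add: chron_def)
      then obtain s where "s \<in> D" "chron tau y s" "chron tau s x" using D(2) by blast
      then show "\<exists>s\<in>D. chron ?t x s \<and> chron ?t s y" by (auto simp: chron_def)
    qed
    then show ?thesis using D(1) unfolding separable_lms_def by blast
  qed
  obtain q where "future_chain ?t q" "F = IpastS ?t (range q)"
    using IP_chain[of ?t F, OF tr sp] ipf IF_flip by blast
  then show ?thesis
    by (auto simp: future_chain_def past_chain_def IpastS_def IfutS_def Ipast_def Ifut_def chron_def)
qed

context
  fixes tau :: "'a::topological_space \<Rightarrow> 'a \<Rightarrow> ennreal"
  assumes lms: "lorentzian_metric_space tau"
begin

lemma rti: "chron tau x y \<Longrightarrow> chron tau y z \<Longrightarrow> tau x z \<ge> tau x y + tau y z"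
  using lms unfolding lorentzian_metric_space_def chron_def by blast

lemma ctrans: "chron tau x y \<Longrightarrow> chron tau y z \<Longrightarrow> chron tau x z"
proof -
  assume a: "chron tau x y" "chron tau y z"
  have "tau x y \<le> tau x y + tau y z" by simp
  also have "\<dots> \<le> tau x z" using rti[OF a] .
  finally show ?thesis using a unfolding chron_def by simp
qed

lemma mono4:
  assumes "chron tau a b" "chron tau c d"
  shows "tau b c \<le> tau a d"
proof (cases "tau b c = 0")
  case True then show ?thesis by simp
next
  case False
  then have bc: "chron tau b c" by (simp add: chron_def zero_less_iff_neq_zero)
  have "tau b c \<le> tau a b + tau b c" by simp
  also have "\<dots> \<le> tau a c" using rti[OF assms(1) bc] .
  finally have 1: "tau b c \<le> tau a c" .
  have ac: "chron tau a c" using ctrans[OF assms(1) bc] .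
  have "tau a c \<le> tau a c + tau c d" by simp
  also have "\<dots> \<le> tau a d" using rti[OF ac assms(2)] .
  finally show ?thesis using 1 by simp
qed

lemma pc_trans: "past_chain tau q \<Longrightarrow> m < n \<Longrightarrow> chron tau (q n) (q m)"
proof (induction n)
  case 0 then show ?case by simp
next
  case (Suc n)
  show ?case
  proof (cases "m = n")
    case True then show ?thesis using Suc.prems by (simp add: past_chain_def)
  next
    case False
    then have "chron tau (q n) (q m)" using Suc by simp
    then show ?thesis using ctrans Suc.prems by (metis past_chain_def)
  qed
qed

lemma fc_trans: "future_chain tau q \<Longrightarrow> m < n \<Longrightarrow> chron tau (q m) (q n)"
proof (induction n)
  case 0 then show ?case by simp
next
  case (Suc n)
  show ?case
  proof (cases "m = n")
    case True then show ?thesis using Suc.prems by (simp add: future_chain_def)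
  next
    case False
    then have "chron tau (q m) (q n)" using Suc by simp
    then show ?thesis using ctrans Suc.prems by (metis future_chain_def)
  qed
qed

lemma seq_mono:
  assumes "past_chain tau q" "future_chain tau p"
  shows "incseq (\<lambda>n. tau (q n) (p n))"
proof (rule incseq_SucI)
  fix n
  show "tau (q n) (p n) \<le> tau (q (Suc n)) (p (Suc n))"
    using mono4 assms unfolding past_chain_def future_chain_def by blast
qed

lemma seq_le:
  assumes q: "past_chain tau q" and r: "past_chain tau r"
    and p: "future_chain tau p" and s: "future_chain tau s"
    and F: "IfutS tau (range q) = IfutS tau (range r)"
    and P: "IpastS tau (range p) = IpastS tau (range s)"
  shows "(SUP n. tau (q n) (p n)) \<le> (SUP n. tau (r n) (s n))"
proof (rule SUP_mono)
  fix n assume "n \<in> (UNIV::nat set)"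
  have "q n \<in> IfutS tau (range q)" using q unfolding past_chain_def IfutS_def Ifut_def by blast
  then obtain m where m: "chron tau (r m) (q n)" using F unfolding IfutS_def Ifut_def by auto
  have "p n \<in> IpastS tau (range p)" using p unfolding future_chain_def IpastS_def Ipast_def by blast
  then obtain k where k: "chron tau (p n) (s k)" using P unfolding IpastS_def Ipast_def by auto
  define N where "N = max m k"
  have rN: "chron tau (r N) (q n)"
  proof (cases "N = m")
    case True then show ?thesis using m by simp
  next
    case False then have "m < N" unfolding N_def by simp
    then show ?thesis using pc_trans[OF r] ctrans m by blast
  qed
  have sN: "chron tau (p n) (s N)"
  proof (cases "N = k")
    case True then show ?thesis using k by simp
  next
    case False then have "k < N" unfolding N_def by simp
    then show ?thesis using fc_trans[OF s] ctrans k by blast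
  qed
  have "tau (q n) (p n) \<le> tau (r N) (s N)" using mono4[OF rN sN] .
  then show "\<exists>m\<in>UNIV. tau (q n) (p n) \<le> tau (r m) (s m)" by blast
qed

end

theorem mainTheorem15:
  fixes tau :: "'a::topological_space \<Rightarrow> 'a \<Rightarrow> ennreal"
    and P F P' F' :: "'a set"
  assumes "lorentzian_metric_space tau"
    and "separable_lms tau"
    and "chronologically_dense tau"
    and "S_property tau"
    and "(P, F) \<in> c_completion tau"
    and "(P', F') \<in> c_completion tau"
    and "F \<noteq> {}" and "P' \<noteq> {}"
  shows "(\<exists>q. past_chain tau q \<and> F = IfutS tau (range q)) \<and>
         (\<exists>p'. future_chain tau p' \<and> P' = IpastS tau (range p')) \<and>
         (\<exists>L::ennreal. \<forall>q p'. past_chain tau q \<and> F = IfutS tau (range q) \<and>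
                              future_chain tau p' \<and> P' = IpastS tau (range p') \<longrightarrow>
                              (\<lambda>n. tau (q n) (p' n)) \<longlonglongrightarrow> L)"
proof -
  note lms = assms(1)
  have tr: "\<forall>x y z. chron tau x y \<longrightarrow> chron tau y z \<longrightarrow> chron tau x z"
    using ctrans[OF lms] by blast
  have IFF: "IF tau F" using assms(5,7) unfolding c_completion_def Srel_def Srel_ne_def by auto
  have IPP: "IP tau P'" using assms(6,8) unfolding c_completion_def Srel_def Srel_ne_def by auto
  obtain q0 where q0: "past_chain tau q0" "F = IfutS tau (range q0)"
    using IF_chain[OF tr assms(2) IFF] by blast
  obtain p0 where p0: "future_chain tau p0" "P' = IpastS tau (range p0)"
    using IP_chain[OF tr assms(2) IPP] by blast
  define L where "L = (SUP n. tau (q0 n) (p0 n))"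
  have "\<forall>q p'. past_chain tau q \<and> F = IfutS tau (range q) \<and>
           future_chain tau p' \<and> P' = IpastS tau (range p') \<longrightarrow>
           (\<lambda>n. tau (q n) (p' n)) \<longlonglongrightarrow> L"
  proof (intro allI impI)
    fix q p' assume h: "past_chain tau q \<and> F = IfutS tau (range q) \<and>
           future_chain tau p' \<and> P' = IpastS tau (range p')"
    have lim: "(\<lambda>n. tau (q n) (p' n)) \<longlonglongrightarrow> (SUP n. tau (q n) (p' n))"
      using LIMSEQ_SUP seq_mono[OF lms] h by blast
    have "(SUP n. tau (q n) (p' n)) \<le> L" unfolding L_def
      using seq_le[OF lms, of q q0 p' p0] h q0 p0 by simp
    moreover have "L \<le> (SUP n. tau (q n) (p' n))" unfolding L_def
      using seq_le[OF lms, of q0 q p0 p'] h q0 p0 by simp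
    ultimately show "(\<lambda>n. tau (q n) (p' n)) \<longlonglongrightarrow> L" using lim by simp
  qed
  then show ?thesis using q0 p0 by blast
qed

end
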